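(* Assume (F1), (F2), (H1), (H2), and let $c>c^*$. Then for every $\eta\in\big(1,\min\{1+\sigma,\lambda_2(c)/\lambda_1(c)\}\big)$ there exists $Q(c,\eta)>1$ such that for any $q>Q(c,\eta)$ and any $\xi^{\pm}\in\mathbb{R}$, the functions $$\phi^+(\xi)=\min\Big\{K,\ e^{\lambda_1(c)(\xi+\xi^+)}+q\,e^{\eta\lambda_1(c)(\xi+\xi^+)}\Big\},\qquad \phi^-(\xi)=\max\Big\{0,\ e^{\lambda_1(c)(\xi+\xi^-)}-q\,e^{\eta\lambda_1(c)(\xi+\xi^-)}\Big\}$$ are a super-solution and a sub-solution (with speed $c$), respectively.
   Context: Fix constants $d>0$, $\tau\geq0$, $K>0$, $f:[0,K]^2\to\mathbb{R}$ and $h:\mathbb{R}\to\mathbb{R}$ (partial derivatives of $f$ assumed to exist). (F1) $f\in C([0,K]^2,\mathbb{R})$, $f(0,0)=f(K,K)=0$, $f(u,u)>0$ for $u\in(0,K)$, $\partial_2f(u,v)\geq0$ on $[0,K]^2$. (F2) There exist $M>0$, $\sigma\in(0,1]$ with $0\leq \partial_1f(0,0)u+\partial_2f(0,0)v-f(u,v)\leq M(u+v)^{1+\sigma}$ on $[0,K]^2$, and $\partial_1f(K,K)+\partial_2f(K,K)<0$. (The $\sigma$ in the claim is this one.) (H1) $h\ge0$, even, integrable, $\int_{\mathbb{R}}h=1$. (H2) There is $\lambda_0\in(0,\infty]$ with $\int_0^\infty h(x)e^{\lambda x}dx<\infty$ for all $\lambda<\lambda_0$. Let $G(\lambda)=\int_{\mathbb{R}}h(y)e^{-\lambda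 y}dy$, $\lambda^+=\lambda_0$ if $\partial_2f(0,0)>0$ and $\lambda^+=+\infty$ otherwise, and $\Delta(c,\lambda)=c\lambda-d[e^{\lambda}+e^{-\lambda}-2]-\partial_1f(0,0)-\partial_2f(0,0)e^{-\lambda c\tau}G(\lambda)$. Let $c^*>0$ be the unique number for which there is $\lambda^*\in(0,\lambda^+)$ with $\Delta(c^*,\lambda^* )=0=\partial_\lambda\Delta(c^*,\lambda^* )$; for $c>c^*$ the equation $\Delta(c,\cdot)=0$ has exactly two positive roots $\lambda_1(c)<\lambda_2(c)$ in $(0,\lambda^+)$. Notation: $\Delta_1\varphi(\xi)=\varphi(\xi+1)-2\varphi(\xi)+\varphi(\xi-1)$, $(h*\varphi)(\xi)=\int h(y)\varphi(\xi-y)dy$. For absolutely continuous $\varphi:\mathbb{R}\to[0,K]$ set $N_c[\varphi](\xi)=c\lim_{s\to0}\frac{\varphi(\xi)-\varphi(\xi-s)}{s}-d\Delta_1\varphi(\xi)-f(\varphi(\xi),(h*\varphi)(\xi-c\tau))$. A super-solution is a non-decreasing continuous $\varphi^+$ with $\varphi^+(-\infty)=0$, differentiable a.e., with $N_c[\varphi^+]\ge0$ a.e. A sub-solution is a continuous $\varphi^-$ with $\varphi^-(-\infty)=0$, not identically zero, differentiable a.e., with $N_c[\varphi^-]\le0$ a.e. *)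

theory Defs
  imports "HOL-Analysis.Analysis"
begin

definition abs_continuous :: "(real \<Rightarrow> real) \<Rightarrow> bool" where
  "abs_continuous \<phi> \<longleftrightarrow>
     (\<forall>\<epsilon>>0. \<exists>\<delta>>0. \<forall>(n::nat) (a::nat\<Rightarrow>real) (b::nat\<Rightarrow>real).
        (\<forall>i<n. a i \<le> b i) \<and> (\<forall>i. Suc i < n \<longrightarrow> b i \<le> a (Suc i)) \<and>
        (\<Sum>i<n. b i - a i) < \<delta> \<longrightarrow> (\<Sum>i<n. \<bar>\<phi> (b i) - \<phi> (a i)\<bar>) < \<epsilon>)"

definition disc_lap :: "(real \<Rightarrow> real) \<Rightarrow> real \<Rightarrow> real" where
  "disc_lap \<phi> \<xi> = \<phi> (\<xi> + 1) - 2 * \<phi> \<xi> + \<phi> (\<xi> - 1)"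

definition conv :: "(real \<Rightarrow> real) \<Rightarrow> (real \<Rightarrow> real) \<Rightarrow> real \<Rightarrow> real" where
  "conv h \<phi> \<xi> = integral UNIV (\<lambda>y. h y * \<phi> (\<xi> - y))"

text \<open>N_c[phi](xi), evaluated at a point where phi has derivative D
  (the limit in the definition of N_c is the derivative of phi at xi).\<close>
definition Nop :: "real \<Rightarrow> real \<Rightarrow> real \<Rightarrow> (real \<Rightarrow> real \<Rightarrow> real) \<Rightarrow> (real \<Rightarrow> real)
    \<Rightarrow> (real \<Rightarrow> real) \<Rightarrow> real \<Rightarrow> real \<Rightarrow> real" where
  "Nop c d \<tau> f h \<phi> \<xi> D = c * D - d * disc_lap \<phi> \<xi> - f (\<phi> \<xi>) (conv h \<phi> (\<xi> - c * \<tau>))"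

definition admissible :: "real \<Rightarrow> (real \<Rightarrow> real) \<Rightarrow> bool" where
  "admissible K \<phi> \<longleftrightarrow> abs_continuous \<phi> \<and> (\<forall>x. \<phi> x \<in> {0..K})"

definition super_solution :: "real \<Rightarrow> real \<Rightarrow> real \<Rightarrow> real \<Rightarrow> (real \<Rightarrow> real \<Rightarrow> real)
    \<Rightarrow> (real \<Rightarrow> real) \<Rightarrow> (real \<Rightarrow> real) \<Rightarrow> bool" where
  "super_solution K c d \<tau> f h \<phi> \<longleftrightarrow>
     admissible K \<phi> \<and> mono \<phi> \<and> continuous_on UNIV \<phi> \<and> (\<phi> \<longlongrightarrow> 0) at_bot \<and>
     (AE \<xi> in lborel. \<exists>D. (\<phi> has_real_derivative D) (at \<xi>) \<and> Nop c d \<tau> f h \<phi> \<xi> D \<ge> 0)"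

definition sub_solution :: "real \<Rightarrow> real \<Rightarrow> real \<Rightarrow> real \<Rightarrow> (real \<Rightarrow> real \<Rightarrow> real)
    \<Rightarrow> (real \<Rightarrow> real) \<Rightarrow> (real \<Rightarrow> real) \<Rightarrow> bool" where
  "sub_solution K c d \<tau> f h \<phi> \<longleftrightarrow>
     admissible K \<phi> \<and> continuous_on UNIV \<phi> \<and> (\<phi> \<longlongrightarrow> 0) at_bot \<and> (\<exists>x. \<phi> x \<noteq> 0) \<and>
     (AE \<xi> in lborel. \<exists>D. (\<phi> has_real_derivative D) (at \<xi>) \<and> Nop c d \<tau> f h \<phi> \<xi> D \<le> 0)"

definition Gfun :: "(real \<Rightarrow> real) \<Rightarrow> real \<Rightarrow> real" where
  "Gfun h l = integral UNIV (\<lambda>y. h y * exp (- l * y))"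

definition Delta :: "real \<Rightarrow> real \<Rightarrow> real \<Rightarrow> real \<Rightarrow> (real \<Rightarrow> real) \<Rightarrow> real \<Rightarrow> real \<Rightarrow> real" where
  "Delta d \<tau> a b h c l =
     c * l - d * (exp l + exp (- l) - 2) - a - b * exp (- l * c * \<tau>) * Gfun h l"

definition lambda_plus :: "real \<Rightarrow> ereal \<Rightarrow> ereal" where
  "lambda_plus b lam0 = (if b > 0 then lam0 else \<infinity>)"

end

theory Submission
  imports Defs "HOL-Real_Asymp.Real_Asymp"
begin


lemma meas_h_mult:
  assumes "h integrable_on (UNIV::real set)" "continuous_on UNIV g"
  shows "(\<lambda>y. h y * g y :: real) \<in> borel_measurable (lebesgue_on S)"
proof -
  have "(\<lambda>y. h y * g y) \<in> borel_measurable (lebesgue_on UNIV)"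
    by (intro borel_measurable_times integrable_imp_measurable assms
          continuous_imp_measurable_on_sets_lebesgue) auto
  then show ?thesis by (rule measurable_restrict_mono) auto
qed

lemma int_exp:
  fixes h :: "real \<Rightarrow> real" and lam0 :: ereal
  assumes hn: "\<And>x. h x \<ge> 0" and he: "\<And>x. h (- x) = h x"
    and hi: "h integrable_on UNIV"
    and H2: "\<And>l. ereal l < lam0 \<Longrightarrow> (\<lambda>x. h x * exp (l * x)) integrable_on {0..}"
    and l: "0 \<le> l" "ereal l < lam0"
  shows "(\<lambda>y. h y * exp (- l * y)) integrable_on UNIV"
proof -
  have habs: "h absolutely_integrable_on UNIV"
    using hi hn by (intro nonnegative_absolutely_integrable) auto
  have h0: "h absolutely_integrable_on {0..}"
    by (rule set_integrable_subset[OF habs]) auto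
  have A1: "(\<lambda>y. h y * exp (- l * y)) absolutely_integrable_on {0..}"
  proof (rule measurable_bounded_by_integrable_imp_absolutely_integrable)
    show "(\<lambda>y. h y * exp (- l * y)) \<in> borel_measurable (lebesgue_on {0..})"
      by (rule meas_h_mult[OF hi]) (intro continuous_intros)
    show "h integrable_on {0..}" using h0 set_lebesgue_integral_eq_integral(1) by blast
    show "norm (h y * exp (- l * y)) \<le> h y" if "y \<in> {0..}" for y
    proof -
      have "exp (- l * y) \<le> 1" using that l by simp
      then show ?thesis using hn[of y] by (simp add: abs_mult mult_left_le)
    qed
  qed auto
  have B0: "(\<lambda>x. h x * exp (l * x)) absolutely_integrable_on {0..}"
    using H2[OF l(2)] hn by (intro nonnegative_absolutely_integrable) auto
  have "(\<lambda>x. h (-x) * exp (l * (-x))) absolutely_integrable_on {..0}"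
    using has_absolute_integral_reflect_real[of "{..0}" "{0..}" "\<lambda>x. h x * exp (l * x)"] B0
    by auto
  then have A2: "(\<lambda>y. h y * exp (- l * y)) absolutely_integrable_on {..0}"
    by (simp add: he)
  have "(\<lambda>y. h y * exp (- l * y)) absolutely_integrable_on ({..0} \<union> {0..})"
    by (rule set_integrable_Un[OF A2 A1]) auto
  moreover have "{..0} \<union> {0..} = (UNIV::real set)" by auto
  ultimately show ?thesis using set_lebesgue_integral_eq_integral(1) by metis
qed

lemma exp_cvx:
  fixes t x y :: real
  assumes "0 \<le> t" "t \<le> 1"
  shows "exp (t * x + (1 - t) * y) \<le> t * exp x + (1 - t) * exp y"
  using convex_onD[OF exp_convex, of t y x] assms by (simp add: algebra_simps)

lemma conv_exp:
  fixes h :: "real \<Rightarrow> real"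
  assumes "(\<lambda>y. h y * exp (- l * y)) integrable_on UNIV"
  shows "((\<lambda>y. h y * exp (l * (x - y + p))) has_integral (exp (l * (x + p)) * Gfun h l)) UNIV"
proof -
  have "((\<lambda>y. exp (l * (x + p)) * (h y * exp (- l * y))) has_integral (exp (l * (x + p)) * Gfun h l)) UNIV"
    unfolding Gfun_def by (intro has_integral_mult_right integrable_integral assms)
  moreover have "exp (l * (x + p)) * (h y * exp (- l * y)) = h y * exp (l * (x - y + p))" for y
  proof -
    have "l * (x - y + p) = l * (x + p) + (- l * y)" by (simp add: algebra_simps)
    then show ?thesis by (simp only: exp_add mult_ac)
  qed
  ultimately show ?thesis by (simp only:)
qed

lemma conv_bounded:
  fixes h \<phi> :: "real \<Rightarrow> real"
  assumes hn: "\<And>x. h x \<ge> 0" and hi: "h integrable_on UNIV" and h1: "integral UNIV h = 1"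
    and pc: "continuous_on UNIV \<phi>" and pb: "\<And>x. 0 \<le> \<phi> x \<and> \<phi> x \<le> K"
  shows "(\<lambda>y. h y * \<phi> (x - y)) integrable_on UNIV" "0 \<le> conv h \<phi> x" "conv h \<phi> x \<le> K"
proof -
  show I: "(\<lambda>y. h y * \<phi> (x - y)) integrable_on UNIV"
  proof (rule measurable_bounded_by_integrable_imp_integrable)
    show "(\<lambda>y. h y * \<phi> (x - y)) \<in> borel_measurable (lebesgue_on UNIV)"
      by (rule meas_h_mult[OF hi]) (intro continuous_on_compose2[OF pc] continuous_intros; auto)
    show "(\<lambda>y. K * h y) integrable_on UNIV" using integrable_on_cmult_left[OF hi, of K] by simp
    show "norm (h y * \<phi> (x - y)) \<le> K * h y" if "y \<in> UNIV" for y
    proof -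
      have "h y * \<phi> (x - y) \<le> h y * K" using pb[of "x - y"] hn[of y] by (intro mult_left_mono) auto
      then show ?thesis using pb[of "x - y"] hn[of y] by (simp add: abs_mult mult.commute)
    qed
  qed auto
  show "0 \<le> conv h \<phi> x" unfolding conv_def
    using I pb hn by (intro integral_nonneg) auto
  have "conv h \<phi> x \<le> integral UNIV (\<lambda>y. K * h y)" unfolding conv_def
    using I pb hn integrable_on_cmult_left[OF hi, of K] by (intro integral_le) (auto simp: mult.commute[of K] intro!: mult_left_mono)
  also have "\<dots> = K" using h1 by simp
  finally show "conv h \<phi> x \<le> K" .
qed

lemma f_mono_v:
  fixes f f2 :: "real \<Rightarrow> real \<Rightarrow> real"
  assumes f2_deriv: "\<And>u v. u \<in> {0..K} \<Longrightarrow> v \<in> {0..K} \<Longrightarrow>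
        ((\<lambda>y. f u y) has_real_derivative f2 u v) (at v within {0..K})"
    and F1_mono: "\<And>u v. u \<in> {0..K} \<Longrightarrow> v \<in> {0..K} \<Longrightarrow> f2 u v \<ge> 0"
    and u: "u \<in> {0..K}" and v: "0 \<le> v1" "v1 \<le> v2" "v2 \<le> K"
  shows "f u v1 \<le> f u v2"
proof -
  have "\<exists>x\<in>{v1..v2}. f u v2 - f u v1 = f2 u x * (v2 - v1)"
  proof (rule mvt_very_simple[where f' = "\<lambda>x t. f2 u x * t"])
    fix x assume x: "v1 \<le> x" "x \<le> v2"
    have "((\<lambda>y. f u y) has_real_derivative f2 u x) (at x within {0..K})"
      using f2_deriv[OF u] x v by auto
    then have "((\<lambda>y. f u y) has_real_derivative f2 u x) (at x within {v1..v2})"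
      by (rule DERIV_subset) (use v in auto)
    then show "((\<lambda>y. f u y) has_derivative (\<lambda>t. f2 u x * t)) (at x within {v1..v2})"
      by (simp add: has_field_derivative_def)
  qed (use v in auto)
  then obtain x where x: "x \<in> {v1..v2}" "f u v2 - f u v1 = f2 u x * (v2 - v1)" by blast
  have "f2 u x \<ge> 0" using F1_mono[OF u] x v by auto
  then show ?thesis using x v by (simp add: algebra_simps) (metis diff_ge_0_iff_ge mult_nonneg_nonneg x(2) v(2))
qed

lemma lip_abs_cont:
  assumes L: "L > 0" and lip: "\<And>x y. \<bar>\<phi> x - \<phi> y\<bar> \<le> L * \<bar>x - y\<bar>"
  shows "abs_continuous \<phi>"
  unfolding abs_continuous_def
proof (intro allI impI)
  fix \<epsilon> :: real assume e: "\<epsilon> > 0"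
  show "\<exists>\<delta>>0. \<forall>(n::nat) (a::nat\<Rightarrow>real) (b::nat\<Rightarrow>real).
        (\<forall>i<n. a i \<le> b i) \<and> (\<forall>i. Suc i < n \<longrightarrow> b i \<le> a (Suc i)) \<and>
        (\<Sum>i<n. b i - a i) < \<delta> \<longrightarrow> (\<Sum>i<n. \<bar>\<phi> (b i) - \<phi> (a i)\<bar>) < \<epsilon>"
  proof (intro exI[of _ "\<epsilon> / L"] conjI allI impI)
    show "\<epsilon> / L > 0" using e L by simp
    fix n a b assume H: "(\<forall>i<n. a i \<le> b (i::nat)) \<and> (\<forall>i. Suc i < n \<longrightarrow> b i \<le> a (Suc i)) \<and>
        (\<Sum>i<n. b i - a i) < \<epsilon> / L"
    have "(\<Sum>i<n. \<bar>\<phi> (b i) - \<phi> (a i)\<bar>) \<le> (\<Sum>i<n. L * (b i - a i))"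
    proof (rule sum_mono)
      fix i assume "i \<in> {..<n}"
      then have "a i \<le> b i" using H by auto
      then show "\<bar>\<phi> (b i) - \<phi> (a i)\<bar> \<le> L * (b i - a i)" using lip[of "b i" "a i"] by simp
    qed
    also have "\<dots> = L * (\<Sum>i<n. b i - a i)" by (simp add: sum_distrib_left)
    also have "\<dots> < L * (\<epsilon> / L)" using H L by (intro mult_strict_left_mono) auto
    also have "\<dots> = \<epsilon>" using L by simp
    finally show "(\<Sum>i<n. \<bar>\<phi> (b i) - \<phi> (a i)\<bar>) < \<epsilon>" .
  qed
qed

lemma Delta_concave:
  fixes h :: "real \<Rightarrow> real"
  assumes d: "d \<ge> 0" and B: "B \<ge> 0" and t: "0 \<le> t" "t \<le> 1"
    and I: "B > 0 \<Longrightarrow> \<forall>k\<in>{l1, l2, t*l1+(1-t)*l2}. (\<lambda>y. h y * exp (- k * y)) integrable_on UNIV"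
    and hn: "\<And>x. h x \<ge> 0"
  shows "t * Delta d \<tau> a B h c l1 + (1-t) * Delta d \<tau> a B h c l2 \<le> Delta d \<tau> a B h c (t*l1+(1-t)*l2)"
proof -
  define l where "l = t*l1+(1-t)*l2"
  have e1: "exp l \<le> t * exp l1 + (1-t) * exp l2" unfolding l_def using exp_cvx t by blast
  have "exp (t*(-l1) + (1-t)*(-l2)) \<le> t * exp (-l1) + (1-t) * exp (-l2)" using exp_cvx t by blast
  then have e2: "exp (-l) \<le> t * exp (-l1) + (1-t) * exp (-l2)" unfolding l_def by (simp add: algebra_simps)
  have ed: "d * (exp l + exp (-l) - 2) \<le> d * (t * (exp l1 + exp (-l1) - 2) + (1-t) * (exp l2 + exp (-l2) - 2))"
    using e1 e2 d by (intro mult_left_mono) (auto simp: algebra_simps)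
  have g: "B * exp (-l*c*\<tau>) * Gfun h l \<le> t * (B * exp (-l1*c*\<tau>) * Gfun h l1) + (1-t) * (B * exp (-l2*c*\<tau>) * Gfun h l2)"
  proof (cases "B > 0")
    case False then show ?thesis using B by simp
  next
    case True
    have H: "((\<lambda>y. exp (-k*c*\<tau>) * (h y * exp (-k*y))) has_integral exp (-k*c*\<tau>) * Gfun h k) UNIV"
      if "k \<in> {l1, l2, l}" for k
      using I[OF True] that unfolding Gfun_def l_def
      by (intro has_integral_mult_right integrable_integral) auto
    have R: "((\<lambda>y. t * (exp (-l1*c*\<tau>) * (h y * exp (-l1*y))) + (1-t) * (exp (-l2*c*\<tau>) * (h y * exp (-l2*y))))
       has_integral (t * (exp (-l1*c*\<tau>) * Gfun h l1) + (1-t) * (exp (-l2*c*\<tau>) * Gfun h l2))) UNIV"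
      by (intro has_integral_add has_integral_mult_right H) auto
    have le: "exp (-l*c*\<tau>) * (h y * exp (-l*y)) \<le> t * (exp (-l1*c*\<tau>) * (h y * exp (-l1*y))) + (1-t) * (exp (-l2*c*\<tau>) * (h y * exp (-l2*y)))" for y
    proof -
      have eq: "-l*c*\<tau> + -l*y = t*(-l1*(c*\<tau>+y)) + (1-t)*(-l2*(c*\<tau>+y))" unfolding l_def by (simp add: algebra_simps)
      have "exp (-l*c*\<tau> + -l*y) \<le> t * exp (-l1*(c*\<tau>+y)) + (1-t) * exp (-l2*(c*\<tau>+y))"
        unfolding eq by (rule exp_cvx[OF t])
      also have "\<dots> = t * exp (-l1*c*\<tau> + -l1*y) + (1-t) * exp (-l2*c*\<tau> + -l2*y)"
        by (simp add: algebra_simps)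
      finally have "exp (-l*c*\<tau> + -l*y) \<le> t * exp (-l1*c*\<tau> + -l1*y) + (1-t) * exp (-l2*c*\<tau> + -l2*y)" .
      then have "h y * exp (-l*c*\<tau> + -l*y) \<le> h y * (t * exp (-l1*c*\<tau> + -l1*y) + (1-t) * exp (-l2*c*\<tau> + -l2*y))"
        using hn by (intro mult_left_mono) auto
      then show ?thesis by (simp only: exp_add) (simp add: algebra_simps)
    qed
    have "exp (-l*c*\<tau>) * Gfun h l \<le> t * (exp (-l1*c*\<tau>) * Gfun h l1) + (1-t) * (exp (-l2*c*\<tau>) * Gfun h l2)"
      by (rule has_integral_le[OF H R le]) auto
    then show ?thesis using B by (simp add: algebra_simps) (metis mult_left_mono B mult.assoc distrib_left)
  qed
  show ?thesis unfolding Delta_def l_def[symmetric]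
  proof -
    have "c * l = t * (c * l1) + (1-t) * (c * l2)" unfolding l_def by (simp add: algebra_simps)
    then show "t * (c * l1 - d * (exp l1 + exp (- l1) - 2) - a - B * exp (- l1 * c * \<tau>) * Gfun h l1) +
      (1 - t) * (c * l2 - d * (exp l2 + exp (- l2) - 2) - a - B * exp (- l2 * c * \<tau>) * Gfun h l2)
      \<le> c * l - d * (exp l + exp (- l) - 2) - a - B * exp (- l * c * \<tau>) * Gfun h l"
      using ed g by (simp add: algebra_simps)
  qed
qed

lemma exp_lin_at_bot:
  fixes l p :: real
  assumes "l > 0"
  shows "((\<lambda>x. exp (l * (x + p))) \<longlongrightarrow> 0) at_bot"
  using assms by real_asymp

locale LS =
  fixes d \<tau> K M \<sigma> c lam1 lam2 \<eta> :: real
    and f f1 f2 :: "real \<Rightarrow> real \<Rightarrow> real"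
    and h :: "real \<Rightarrow> real"
    and lam0 :: ereal
  assumes d_pos: "d > 0" and tau_nonneg: "\<tau> \<ge> 0" and K_pos: "K > 0"
    and f2_deriv: "\<And>u v. u \<in> {0..K} \<Longrightarrow> v \<in> {0..K} \<Longrightarrow>
        ((\<lambda>y. f u y) has_real_derivative f2 u v) (at v within {0..K})"
    and F1_zero: "f 0 0 = 0" "f K K = 0"
    and F1_mono: "\<And>u v. u \<in> {0..K} \<Longrightarrow> v \<in> {0..K} \<Longrightarrow> f2 u v \<ge> 0"
    and F2_M: "M > 0" and F2_sigma: "0 < \<sigma>" "\<sigma> \<le> 1"
    and F2_bound: "\<And>u v. u \<in> {0..K} \<Longrightarrow> v \<in> {0..K} \<Longrightarrow>
        0 \<le> f1 0 0 * u + f2 0 0 * v - f u v \<and>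
        f1 0 0 * u + f2 0 0 * v - f u v \<le> M * (u + v) powr (1 + \<sigma>)"
    and H1_nonneg: "\<And>x. h x \<ge> 0" and H1_even: "\<And>x. h (- x) = h x"
    and H1_int: "h integrable_on UNIV" and H1_one: "integral UNIV h = 1"
    and H2_exp: "\<And>l. ereal l < lam0 \<Longrightarrow> (\<lambda>x. h x * exp (l * x)) integrable_on {0..}"
    and lam_order: "0 < lam1" "lam1 < lam2" "ereal lam2 < lambda_plus (f2 0 0) lam0"
    and lam_roots: "Delta d \<tau> (f1 0 0) (f2 0 0) h c lam1 = 0"
                   "Delta d \<tau> (f1 0 0) (f2 0 0) h c lam2 = 0"
    and lam_only: "\<And>l. 0 < l \<Longrightarrow> ereal l < lambda_plus (f2 0 0) lam0 \<Longrightarrow>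
        Delta d \<tau> (f1 0 0) (f2 0 0) h c l = 0 \<Longrightarrow> l = lam1 \<or> l = lam2"
    and eta: "1 < \<eta>" "\<eta> < 1 + \<sigma>" "\<eta> < lam2 / lam1"
begin

abbreviation "A \<equiv> f1 0 0"
abbreviation "B \<equiv> f2 0 0"
abbreviation "Dl \<equiv> Delta d \<tau> (f1 0 0) (f2 0 0) h c"

lemma B_nonneg: "B \<ge> 0" using F1_mono[of 0 0] K_pos by auto

lemma eta_lam: "lam1 < \<eta> * lam1" "\<eta> * lam1 < lam2"
  using eta lam_order by (auto simp: field_simps)

lemma goodI:
  assumes "0 \<le> l" "l \<le> lam2" "B > 0"
  shows "(\<lambda>y. h y * exp (- l * y)) integrable_on UNIV"
proof (rule int_exp[OF H1_nonneg H1_even H1_int H2_exp])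
  have "ereal l \<le> ereal lam2" using assms by simp
  also have "\<dots> < lam0" using lam_order(3) assms(3) by (simp add: lambda_plus_def)
  finally show "ereal l < lam0" .
qed (use assms in auto)

lemma Delta_eta_pos: "Dl (\<eta> * lam1) > 0"
proof -
  define t where "t = (lam2 - \<eta> * lam1) / (lam2 - lam1)"
  have t: "0 \<le> t" "t \<le> 1" using eta_lam lam_order unfolding t_def by (auto simp: field_simps)
  have l: "t * lam1 + (1 - t) * lam2 = \<eta> * lam1"
  proof -
    have ne: "lam2 - lam1 \<noteq> 0" using lam_order by simp
    have "(1 - t) * (lam2 - lam1) = \<eta> * lam1 - lam1"
      unfolding t_def using ne by (simp add: field_simps)
    then have "t * lam1 + (1 - t) * lam2 = lam1 + (\<eta> * lam1 - lam1)" by (simp add: algebra_simps)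
    then show ?thesis by simp
  qed
  have "t * Dl lam1 + (1-t) * Dl lam2 \<le> Dl (t * lam1 + (1 - t) * lam2)"
  proof (rule Delta_concave[OF _ B_nonneg t _ H1_nonneg])
    show "0 \<le> d" using d_pos by simp
    show "\<forall>k\<in>{lam1, lam2, t * lam1 + (1 - t) * lam2}. (\<lambda>y. h y * exp (- k * y)) integrable_on UNIV"
      if "B > 0"
    proof -
      have "(\<lambda>y. h y * exp (- k * y)) integrable_on UNIV" if "k \<in> {lam1, lam2, \<eta> * lam1}" for k
      proof -
        have "0 \<le> k \<and> k \<le> lam2" 
        proof -
          have "k = lam1 \<or> k = lam2 \<or> k = \<eta> * lam1" using that by auto
          moreover note lam_order(1,2) eta_lam
          ultimately show ?thesis by linarith
        qed
        then show ?thesis by (intro goodI[OF _ _ \<open>B > 0\<close>]) auto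
      qed
      then show ?thesis unfolding l by blast
    qed
  qed
  then have ge: "Dl (\<eta> * lam1) \<ge> 0" using l lam_roots by simp
  have "ereal (\<eta> * lam1) < ereal lam2" using eta_lam by simp
  also have "\<dots> < lambda_plus B lam0" by (rule lam_order(3))
  finally have "Dl (\<eta> * lam1) \<noteq> 0"
    using lam_only[of "\<eta> * lam1"] eta_lam lam_order by auto
  then show ?thesis using ge by simp
qed

lemma lin_exp:
  "c * (l * exp (l * (\<xi> + s))) - d * disc_lap (\<lambda>x. exp (l * (x + s))) \<xi> - A * exp (l * (\<xi> + s))
     - B * (exp (l * (\<xi> - c * \<tau> + s)) * Gfun h l) = Dl l * exp (l * (\<xi> + s))"
proof -
  have e1: "exp (l * (\<xi> + 1 + s)) = exp (l * (\<xi> + s)) * exp l"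
    by (simp add: exp_add[symmetric] algebra_simps)
  have e2: "exp (l * (\<xi> - 1 + s)) = exp (l * (\<xi> + s)) * exp (- l)"
    by (simp add: exp_add[symmetric] algebra_simps)
  have e3: "exp (l * (\<xi> - c * \<tau> + s)) = exp (l * (\<xi> + s)) * exp (- l * c * \<tau>)"
    by (simp add: exp_add[symmetric] algebra_simps)
  show ?thesis unfolding disc_lap_def Delta_def e1 e2 e3 by (simp add: algebra_simps)
qed


lemma super:
  assumes q: "q \<ge> 0"
  shows "super_solution K c d \<tau> f h (\<lambda>\<xi>. min K (exp (lam1 * (\<xi> + p)) + q * exp (\<eta> * lam1 * (\<xi> + p))))"
proof -
  define S where "S \<xi> = exp (lam1 * (\<xi> + p)) + q * exp (\<eta> * lam1 * (\<xi> + p))" for \<xi>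
  define S' where "S' \<xi> = lam1 * exp (lam1 * (\<xi> + p)) + q * (\<eta> * lam1 * exp (\<eta> * lam1 * (\<xi> + p)))" for \<xi>
  define \<phi> where "\<phi> \<xi> = min K (S \<xi>)" for \<xi>
  have \<phi>eq: "(\<lambda>\<xi>. min K (exp (lam1 * (\<xi> + p)) + q * exp (\<eta> * lam1 * (\<xi> + p)))) = \<phi>"
    by (simp add: \<phi>_def S_def fun_eq_iff)
  have l1: "lam1 > 0" using lam_order by simp
  have el: "\<eta> * lam1 > 0" using l1 eta by simp
  have Sder: "(S has_real_derivative S' \<xi>) (at \<xi>)" for \<xi>
    unfolding S_def S'_def by (auto intro!: derivative_eq_intros)
  have Scont: "continuous_on UNIV S" unfolding S_def by (intro continuous_intros)
  have Spos: "S \<xi> > 0" for \<xi> unfolding S_def using q by (simp add: add_pos_nonneg)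
  have Smono: "S x < S y" if "x < y" for x y
  proof -
    have "exp (lam1 * (x + p)) < exp (lam1 * (y + p))" using that l1 by simp
    moreover have "q * exp (\<eta> * lam1 * (x + p)) \<le> q * exp (\<eta> * lam1 * (y + p))"
    proof -
      have "\<eta> * lam1 * (x + p) \<le> \<eta> * lam1 * (y + p)" using that el by (intro mult_left_mono) auto
      then show ?thesis using q by (intro mult_left_mono) auto
    qed
    ultimately show ?thesis unfolding S_def by linarith
  qed
  have S'le: "S' \<xi> \<le> \<eta> * lam1 * S \<xi>" for \<xi>
  proof -
    have "lam1 * exp (lam1 * (\<xi> + p)) \<le> \<eta> * lam1 * exp (lam1 * (\<xi> + p))"
      using eta l1 by (intro mult_right_mono) auto
    then show ?thesis unfolding S_def S'_def by (simp add: algebra_simps)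
  qed
  define L where "L = \<eta> * lam1 * K"
  have Lpos: "L > 0" unfolding L_def using el K_pos by simp
  have L1: "S y - S x \<le> L * (y - x)" if "x \<le> y" "S y \<le> K" for x y
  proof (cases "x = y")
    case True then show ?thesis by simp
  next
    case False
    then have "x < y" using that by simp
    then obtain z where z: "x < z" "z < y" "S y - S x = (y - x) * S' z"
      using MVT2[of x y S S'] Sder by blast
    have "S' z \<le> \<eta> * lam1 * S z" by (rule S'le)
    also have "\<dots> \<le> \<eta> * lam1 * K" using Smono[OF z(2)] that el by (intro mult_left_mono) auto
    finally have "(y - x) * S' z \<le> (y - x) * (\<eta> * lam1 * K)" using z by (intro mult_left_mono) auto
    then show ?thesis using z unfolding L_def by (simp add: mult.commute)
  qed
  have L2: "\<phi> y - \<phi> x \<le> L * (y - x)" if "x \<le> y" for x y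
  proof (cases "S x \<ge> K")
    case True
    then have "S y \<ge> K" using Smono[of x y] that by (cases "x = y") auto
    then show ?thesis using True that Lpos unfolding \<phi>_def by simp
  next
    case False
    show ?thesis
    proof (cases "S y \<le> K")
      case True then show ?thesis using L1[OF that True] False unfolding \<phi>_def by simp
    next
      case False2: False
      obtain z where z: "x \<le> z" "z \<le> y" "S z = K"
        using IVT[of S x K y] False False2 \<open>x \<le> y\<close> DERIV_isCont[OF Sder] by force
      have "\<phi> y - \<phi> x = S z - S x" using z False False2 unfolding \<phi>_def by simp
      also have "\<dots> \<le> L * (z - x)" using L1[of x z] z by simp
      also have "\<dots> \<le> L * (y - x)" using z Lpos by (intro mult_left_mono) auto
      finally show ?thesis .
    qed
  qed
  have \<phi>mono: "\<phi> x \<le> \<phi> y" if "x \<le> y" for x y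
    using Smono[of x y] that unfolding \<phi>_def by (cases "x = y") (auto simp: min_def)
  have lip: "\<bar>\<phi> x - \<phi> y\<bar> \<le> L * \<bar>x - y\<bar>" for x y
  proof (cases "x \<le> y")
    case True then show ?thesis using L2[OF True] \<phi>mono[OF True] by simp
  next
    case False then show ?thesis using L2[of y x] \<phi>mono[of y x] by simp
  qed
  have \<phi>b: "0 \<le> \<phi> x \<and> \<phi> x \<le> K" for x using Spos[of x] K_pos unfolding \<phi>_def by simp
  have \<phi>c: "continuous_on UNIV \<phi>" unfolding \<phi>_def by (intro continuous_intros Scont)
  have adm: "admissible K \<phi>" unfolding admissible_def using lip_abs_cont[OF Lpos lip] \<phi>b by auto
  have lim: "(\<phi> \<longlongrightarrow> 0) at_bot"
  proof -
    have "(S \<longlongrightarrow> 0 + q * 0) at_bot" unfolding S_def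
      by (intro tendsto_intros exp_lin_at_bot l1 el)
    then have "((\<lambda>x. min K (S x)) \<longlongrightarrow> min K 0) at_bot" by (intro tendsto_intros) simp
    then show ?thesis using K_pos unfolding \<phi>_def by simp
  qed
  have key: "\<exists>D. (\<phi> has_real_derivative D) (at \<xi>) \<and> Nop c d \<tau> f h \<phi> \<xi> D \<ge> 0" if ne: "S \<xi> \<noteq> K" for \<xi>
  proof -
    define V where "V = conv h \<phi> (\<xi> - c * \<tau>)"
    have Vb: "0 \<le> V" "V \<le> K"
      using conv_bounded[OF H1_nonneg H1_int H1_one \<phi>c \<phi>b] unfolding V_def by auto
    have Vint: "(\<lambda>y. h y * \<phi> (\<xi> - c * \<tau> - y)) integrable_on UNIV"
      using conv_bounded[OF H1_nonneg H1_int H1_one \<phi>c \<phi>b] by auto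
    show ?thesis
    proof (cases "S \<xi> > K")
      case True
      have op: "open {x. K < S x}" by (rule open_Collect_less) (auto intro: Scont)
      have der: "(\<phi> has_real_derivative 0) (at \<xi>)"
        by (rule has_field_derivative_transform_within_open[OF DERIV_const op]) (use True in \<open>auto simp: \<phi>_def\<close>)
      have "\<phi> \<xi> = K" using True unfolding \<phi>_def by simp
      then have dl: "disc_lap \<phi> \<xi> \<le> 0" unfolding disc_lap_def using \<phi>b[of "\<xi>+1"] \<phi>b[of "\<xi>-1"] by simp
      have "f K V \<le> f K K" by (rule f_mono_v[OF f2_deriv F1_mono]) (use Vb K_pos in auto)
      then have "f K V \<le> 0" using F1_zero by simp
      then have "Nop c d \<tau> f h \<phi> \<xi> 0 \<ge> 0"
        unfolding Nop_def V_def[symmetric] \<open>\<phi> \<xi> = K\<close> using dl d_pos mult_pos_neg[of d] mult_nonneg_nonpos[of d "disc_lap \<phi> \<xi>"]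
        by simp
      then show ?thesis using der by blast
    next
      case False
      then have lt: "S \<xi> < K" using ne by simp
      have op: "open {x. S x < K}" by (rule open_Collect_less) (auto intro: Scont)
      have der: "(\<phi> has_real_derivative S' \<xi>) (at \<xi>)"
        by (rule has_field_derivative_transform_within_open[OF Sder op]) (use lt in \<open>auto simp: \<phi>_def\<close>)
      have \<phi>\<xi>: "\<phi> \<xi> = S \<xi>" using lt unfolding \<phi>_def by simp
      define e1 where "e1 = exp (lam1 * (\<xi> + p))"
      define e2 where "e2 = exp (\<eta> * lam1 * (\<xi> + p))"
      define X1 where "X1 = exp (lam1 * (\<xi> - c * \<tau> + p)) * Gfun h lam1"
      define X2 where "X2 = exp (\<eta> * lam1 * (\<xi> - c * \<tau> + p)) * Gfun h (\<eta> * lam1)"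
      have fb: "f (S \<xi>) V \<le> A * S \<xi> + B * V"
        using F2_bound[of "S \<xi>" V] lt Spos[of \<xi>] Vb by auto
      have BV: "B * V \<le> B * (X1 + q * X2)"
      proof (cases "B > 0")
        case False then show ?thesis using B_nonneg by simp
      next
        case True
        have I1: "((\<lambda>y. h y * exp (lam1 * (\<xi> - c * \<tau> - y + p))) has_integral X1) UNIV"
          unfolding X1_def
          by (rule conv_exp, rule goodI) (use True lam_order in auto)
        have I2: "((\<lambda>y. h y * exp (\<eta> * lam1 * (\<xi> - c * \<tau> - y + p))) has_integral X2) UNIV"
          unfolding X2_def
          by (rule conv_exp, rule goodI) (use True lam_order eta_lam el in auto)
        have I: "((\<lambda>y. h y * exp (lam1 * (\<xi> - c * \<tau> - y + p)) + q * (h y * exp (\<eta> * lam1 * (\<xi> - c * \<tau> - y + p))))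
            has_integral (X1 + q * X2)) UNIV"
          by (intro has_integral_add has_integral_mult_right I1 I2)
        have "V \<le> X1 + q * X2" unfolding V_def conv_def
        proof (rule has_integral_le[OF integrable_integral[OF Vint] I])
          fix y
          have "\<phi> (\<xi> - c * \<tau> - y) \<le> S (\<xi> - c * \<tau> - y)" unfolding \<phi>_def by simp
          then have "h y * \<phi> (\<xi> - c * \<tau> - y) \<le> h y * S (\<xi> - c * \<tau> - y)"
            using H1_nonneg by (intro mult_left_mono) auto
          then show "h y * \<phi> (\<xi> - c * \<tau> - y) \<le> h y * exp (lam1 * (\<xi> - c * \<tau> - y + p)) + q * (h y * exp (\<eta> * lam1 * (\<xi> - c * \<tau> - y + p)))"
            unfolding S_def by (simp add: algebra_simps)
        qed
        then show ?thesis using True by (intro mult_left_mono) auto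
      qed
      have dlS: "disc_lap \<phi> \<xi> \<le> disc_lap S \<xi>"
        unfolding disc_lap_def \<phi>\<xi> unfolding \<phi>_def by simp
      have dsplit: "disc_lap S \<xi> = disc_lap (\<lambda>x. exp (lam1 * (x + p))) \<xi> + q * disc_lap (\<lambda>x. exp (\<eta> * lam1 * (x + p))) \<xi>"
        unfolding disc_lap_def S_def by (simp add: algebra_simps)
      have le1: "c * (lam1 * e1) - d * disc_lap (\<lambda>x. exp (lam1 * (x + p))) \<xi> - A * e1 - B * X1 = 0"
        using lin_exp[of lam1 \<xi> p] lam_roots unfolding e1_def X1_def by simp
      have le2: "c * (\<eta> * lam1 * e2) - d * disc_lap (\<lambda>x. exp (\<eta> * lam1 * (x + p))) \<xi> - A * e2 - B * X2 = Dl (\<eta> * lam1) * e2"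
        using lin_exp[of "\<eta> * lam1" \<xi> p] unfolding e2_def X2_def by simp
      have pos2: "q * (Dl (\<eta> * lam1) * e2) \<ge> 0"
        using Delta_eta_pos q unfolding e2_def by simp
      have S\<xi>: "S \<xi> = e1 + q * e2" "S' \<xi> = lam1 * e1 + q * (\<eta> * lam1 * e2)"
        unfolding S_def S'_def e1_def e2_def by simp_all
      have ddl: "d * disc_lap \<phi> \<xi> \<le> d * disc_lap S \<xi>" using dlS d_pos by (intro mult_left_mono) auto
      have iden: "c * S' \<xi> - d * disc_lap S \<xi> - A * S \<xi> - B * (X1 + q * X2)
         = (c * (lam1 * e1) - d * disc_lap (\<lambda>x. exp (lam1 * (x + p))) \<xi> - A * e1 - B * X1)
          + q * (c * (\<eta> * lam1 * e2) - d * disc_lap (\<lambda>x. exp (\<eta> * lam1 * (x + p))) \<xi> - A * e2 - B * X2)"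
        unfolding S\<xi> dsplit by (simp add: algebra_simps)
      have "Nop c d \<tau> f h \<phi> \<xi> (S' \<xi>) = c * S' \<xi> - d * disc_lap \<phi> \<xi> - f (S \<xi>) V"
        unfolding Nop_def V_def \<phi>\<xi> by simp
      also have "\<dots> \<ge> c * S' \<xi> - d * disc_lap S \<xi> - A * S \<xi> - B * (X1 + q * X2)"
        using fb BV ddl by linarith
      finally have "Nop c d \<tau> f h \<phi> \<xi> (S' \<xi>) \<ge> 0" unfolding iden le1 le2 using pos2 by linarith
      then show ?thesis using der by blast
    qed
  qed
  have ae: "AE \<xi> in lborel. \<exists>D. (\<phi> has_real_derivative D) (at \<xi>) \<and> Nop c d \<tau> f h \<phi> \<xi> D \<ge> 0"
  proof (cases "\<exists>x0. S x0 = K")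
    case True
    then obtain x0 where x0: "S x0 = K" by blast
    have "S \<xi> \<noteq> K" if "\<xi> \<noteq> x0" for \<xi>
      using Smono[of \<xi> x0] Smono[of x0 \<xi>] that x0 by (cases "\<xi> < x0") auto
    then show ?thesis using key by (auto intro: AE_mp[OF AE_lborel_singleton[of x0]])
  next
    case False then show ?thesis using key by auto
  qed
  show ?thesis unfolding \<phi>eq super_solution_def
    using adm \<phi>c lim ae by (auto intro: monoI \<phi>mono)
qed


definition "C1 = (if B > 0 then exp (- lam1 * c * \<tau>) * Gfun h lam1 else 0)"
definition "Q0 = max (max 1 (exp ((1 - \<eta>) * ln K))) (M * (1 + C1) powr (1 + \<sigma>) / Dl (\<eta> * lam1))"

lemma C1_nonneg: "C1 \<ge> 0"
proof (cases "B > 0")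
  case True
  have "0 \<le> Gfun h lam1" unfolding Gfun_def
    using goodI[of lam1] True lam_order H1_nonneg by (intro integral_nonneg) auto
  then show ?thesis using True unfolding C1_def by simp
qed (simp add: C1_def)

lemma sub:
  assumes q: "q > Q0"
  shows "sub_solution K c d \<tau> f h (\<lambda>\<xi>. max 0 (exp (lam1 * (\<xi> + m)) - q * exp (\<eta> * lam1 * (\<xi> + m))))"
proof -
  have q1: "q > 1" and qK: "q > exp ((1 - \<eta>) * ln K)"
    and qM: "q > M * (1 + C1) powr (1 + \<sigma>) / Dl (\<eta> * lam1)"
    using q unfolding Q0_def by auto
  have D2: "Dl (\<eta> * lam1) > 0" by (rule Delta_eta_pos)
  have qM': "q * Dl (\<eta> * lam1) \<ge> M * (1 + C1) powr (1 + \<sigma>)"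
    using qM D2 by (simp add: field_simps)
  have l1: "lam1 > 0" using lam_order by simp
  have el: "\<eta> * lam1 > 0" using l1 eta by simp
  define k where "k = (\<eta> - 1) * lam1"
  have kpos: "k > 0" unfolding k_def using eta l1 by simp
  define g where "g \<xi> = exp (lam1 * (\<xi> + m)) - q * exp (\<eta> * lam1 * (\<xi> + m))" for \<xi>
  define g' where "g' \<xi> = lam1 * exp (lam1 * (\<xi> + m)) - q * (\<eta> * lam1 * exp (\<eta> * lam1 * (\<xi> + m)))" for \<xi>
  define \<psi> where "\<psi> \<xi> = max 0 (g \<xi>)" for \<xi>
  define \<xi>1 where "\<xi>1 = - ln q / k - m"
  have \<psi>eq: "(\<lambda>\<xi>. max 0 (exp (lam1 * (\<xi> + m)) - q * exp (\<eta> * lam1 * (\<xi> + m)))) = \<psi>"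
    by (simp add: \<psi>_def g_def fun_eq_iff)
  have gder: "(g has_real_derivative g' \<xi>) (at \<xi>)" for \<xi>
    unfolding g_def g'_def by (auto intro!: derivative_eq_intros)
  have gcont: "continuous_on UNIV g" unfolding g_def by (intro continuous_intros)
  have lnq: "ln q > 0" using q1 by simp
  have e2r: "q * exp (\<eta> * lam1 * (\<xi> + m)) = exp (lam1 * (\<xi> + m)) * exp (ln q + k * (\<xi> + m))" for \<xi>
  proof -
    have "\<eta> * lam1 * (\<xi> + m) = lam1 * (\<xi> + m) + (ln q + k * (\<xi> + m)) - ln q"
      unfolding k_def by (simp add: algebra_simps)
    then show ?thesis using q1 by (simp add: exp_add exp_diff)
  qed
  have reg: "\<xi> < \<xi>1 \<longleftrightarrow> ln q + k * (\<xi> + m) < 0" for \<xi>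
  proof -
    have "\<xi> < \<xi>1 \<longleftrightarrow> \<xi> + m < - ln q / k" unfolding \<xi>1_def by auto
    also have "\<dots> \<longleftrightarrow> k * (\<xi> + m) < - ln q" using pos_less_divide_eq[OF kpos, of "\<xi> + m" "- ln q"] by (simp only: mult.commute)
    finally show ?thesis by linarith
  qed
  have reg2: "\<xi> > \<xi>1 \<longleftrightarrow> ln q + k * (\<xi> + m) > 0" for \<xi>
  proof -
    have "\<xi> > \<xi>1 \<longleftrightarrow> \<xi> + m > - ln q / k" unfolding \<xi>1_def by auto
    also have "\<dots> \<longleftrightarrow> k * (\<xi> + m) > - ln q" using pos_divide_less_eq[OF kpos, of "- ln q" "\<xi> + m"] by (simp only: mult.commute)
    finally show ?thesis by linarith
  qed
  have gform: "g \<xi> = exp (lam1 * (\<xi> + m)) * (1 - exp (ln q + k * (\<xi> + m)))" for \<xi>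
    unfolding g_def e2r by (simp add: algebra_simps)
  have gpos: "g \<xi> > 0 \<longleftrightarrow> \<xi> < \<xi>1" for \<xi>
    unfolding gform reg by (simp add: zero_less_mult_iff)
  have gneg: "g \<xi> < 0 \<longleftrightarrow> \<xi> > \<xi>1" for \<xi>
    unfolding gform reg2 by (simp add: mult_less_0_iff)
  have g\<xi>1: "g \<xi>1 = 0" using gpos[of \<xi>1] gneg[of \<xi>1] by simp
  have regb: "lam1 * (\<xi> + m) \<le> 0 \<and> exp (lam1 * (\<xi> + m)) \<le> K \<and> exp (lam1 * (\<xi> + m)) \<le> 1 \<and> exp (ln q + k * (\<xi> + m)) \<le> 1"
    if "\<xi> \<le> \<xi>1" for \<xi>
  proof -
    have k1: "k * (\<xi>1 + m) = - ln q" unfolding \<xi>1_def using kpos by simp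
    have r: "ln q + k * (\<xi> + m) \<le> 0"
    proof (cases "\<xi> = \<xi>1")
      case True then show ?thesis using k1 by simp
    next
      case False then show ?thesis using reg[of \<xi>] that by simp
    qed
    have a: "lam1 * (\<xi> + m) \<le> 0"
    proof (rule ccontr)
      assume "\<not> ?thesis"
      then have "\<xi> + m > 0" using l1 by (simp add: zero_less_mult_iff not_le)
      then have "k * (\<xi> + m) > 0" using kpos by simp
      then show False using r lnq by linarith
    qed
    have "ln (exp ((1 - \<eta>) * ln K)) < ln q" using qK q1 by (subst ln_less_cancel_iff) auto
    then have lqK: "(1 - \<eta>) * ln K < ln q" by simp
    have "(\<eta> - 1) * (lam1 * (\<xi> + m)) = k * (\<xi> + m)" unfolding k_def by simp
    also have "\<dots> \<le> - ln q" using r by simp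
    also have "\<dots> < (\<eta> - 1) * ln K" using lqK by (simp add: algebra_simps)
    finally have "lam1 * (\<xi> + m) < ln K" using eta by simp
    then have "exp (lam1 * (\<xi> + m)) < K" using K_pos by (metis exp_less_cancel_iff exp_ln)
    then show ?thesis using a r by simp
  qed
  define L where "L = lam1 * (1 + \<eta>)"
  have Lpos: "L > 0" unfolding L_def using l1 eta by simp
  have g'b: "\<bar>g' z\<bar> \<le> L" if "z \<le> \<xi>1" for z
  proof -
    note R = regb[OF that]
    have "q * (\<eta> * lam1 * exp (\<eta> * lam1 * (z + m))) = \<eta> * lam1 * (exp (lam1 * (z + m)) * exp (ln q + k * (z + m)))"
      using e2r[of z] by (simp add: algebra_simps)
    also have "\<dots> \<le> \<eta> * lam1 * 1"
      using R el mult_le_one[of "exp (lam1 * (z + m))" "exp (ln q + k * (z + m))"]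
      by (intro mult_left_mono) auto
    finally have t2: "q * (\<eta> * lam1 * exp (\<eta> * lam1 * (z + m))) \<le> \<eta> * lam1" by simp
    have t1: "lam1 * exp (lam1 * (z + m)) \<le> lam1" using R l1 by (simp add: mult_le_cancel_left1)
    have "0 \<le> q * (\<eta> * lam1 * exp (\<eta> * lam1 * (z + m)))" using q1 el by simp
    moreover have "0 \<le> lam1 * exp (lam1 * (z + m))" using l1 by simp
    ultimately show ?thesis using t1 t2 unfolding g'_def L_def by (simp add: algebra_simps abs_le_iff)
  qed
  have Lg: "\<bar>g y - g x\<bar> \<le> L * (y - x)" if "x \<le> y" "y \<le> \<xi>1" for x y
  proof (cases "x = y")
    case True then show ?thesis by simp
  next
    case False
    then have "x < y" using that by simp
    then obtain z where z: "x < z" "z < y" "g y - g x = (y - x) * g' z"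
      using MVT2[of x y g g'] gder by blast
    have "\<bar>g y - g x\<bar> = (y - x) * \<bar>g' z\<bar>" using z by (simp add: abs_mult)
    also have "\<dots> \<le> (y - x) * L" using g'b[of z] z that by (intro mult_left_mono) auto
    finally show ?thesis by (simp add: mult.commute)
  qed
  have \<psi>g: "\<psi> \<xi> = g \<xi>" if "\<xi> \<le> \<xi>1" for \<xi>
    using gneg[of \<xi>] that unfolding \<psi>_def by auto
  have \<psi>0: "\<psi> \<xi> = 0" if "\<xi> \<ge> \<xi>1" for \<xi>
    using gpos[of \<xi>] that unfolding \<psi>_def by auto
  have L2: "\<bar>\<psi> y - \<psi> x\<bar> \<le> L * (y - x)" if "x \<le> y" for x y
  proof (cases "y \<le> \<xi>1")
    case True then show ?thesis using Lg[OF that True] \<psi>g[of x] \<psi>g[of y] that by simp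
  next
    case False
    show ?thesis
    proof (cases "x \<ge> \<xi>1")
      case True then show ?thesis using \<psi>0[of x] \<psi>0[of y] that Lpos by simp
    next
      case False2: False
      have "\<bar>\<psi> y - \<psi> x\<bar> = \<bar>g \<xi>1 - g x\<bar>" using \<psi>0[of y] \<psi>g[of x] False False2 g\<xi>1 by simp
      also have "\<dots> \<le> L * (\<xi>1 - x)" using Lg[of x \<xi>1] False2 by simp
      also have "\<dots> \<le> L * (y - x)" using False Lpos by (intro mult_left_mono) auto
      finally show ?thesis .
    qed
  qed
  have lip: "\<bar>\<psi> x - \<psi> y\<bar> \<le> L * \<bar>x - y\<bar>" for x y
  proof (cases "x \<le> y")
    case True then show ?thesis using L2[OF True] by (simp add: abs_minus_commute)
  next
    case False then show ?thesis using L2[of y x] by simp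
  qed
  have gle: "g \<xi> \<le> exp (lam1 * (\<xi> + m))" for \<xi> unfolding g_def using q1 by simp
  have \<psi>b: "0 \<le> \<psi> x \<and> \<psi> x \<le> K" for x
  proof (cases "g x > 0")
    case True
    then have "x \<le> \<xi>1" using gpos by auto
    then show ?thesis using regb[of x] gle[of x] K_pos unfolding \<psi>_def by auto
  next
    case False then show ?thesis using K_pos unfolding \<psi>_def by auto
  qed
  have \<psi>c: "continuous_on UNIV \<psi>" unfolding \<psi>_def by (intro continuous_intros gcont)
  have adm: "admissible K \<psi>" unfolding admissible_def using lip_abs_cont[OF Lpos lip] \<psi>b by auto
  have lim: "(\<psi> \<longlongrightarrow> 0) at_bot"
  proof -
    have "(g \<longlongrightarrow> 0 - q * 0) at_bot" unfolding g_def
      by (intro tendsto_intros exp_lin_at_bot l1 el)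
    then have "((\<lambda>x. max 0 (g x)) \<longlongrightarrow> max 0 0) at_bot" by (intro tendsto_intros) simp
    then show ?thesis unfolding \<psi>_def by simp
  qed
  have nz: "\<exists>x. \<psi> x \<noteq> 0"
  proof -
    have "g (\<xi>1 - 1) > 0" using gpos by simp
    then show ?thesis unfolding \<psi>_def by (intro exI[of _ "\<xi>1 - 1"]) simp
  qed
  have key: "\<exists>D. (\<psi> has_real_derivative D) (at \<xi>) \<and> Nop c d \<tau> f h \<psi> \<xi> D \<le> 0" if ne: "\<xi> \<noteq> \<xi>1" for \<xi>
  proof -
    define V where "V = conv h \<psi> (\<xi> - c * \<tau>)"
    have Vb: "0 \<le> V" "V \<le> K"
      using conv_bounded[OF H1_nonneg H1_int H1_one \<psi>c \<psi>b] unfolding V_def by auto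
    have Vint: "(\<lambda>y. h y * \<psi> (\<xi> - c * \<tau> - y)) integrable_on UNIV"
      using conv_bounded[OF H1_nonneg H1_int H1_one \<psi>c \<psi>b] by auto
    show ?thesis
    proof (cases "\<xi> > \<xi>1")
      case True
      have op: "open {x. g x < 0}" by (rule open_Collect_less) (auto intro: gcont)
      have der: "(\<psi> has_real_derivative 0) (at \<xi>)"
        by (rule has_field_derivative_transform_within_open[OF DERIV_const op]) (use True gneg in \<open>auto simp: \<psi>_def\<close>)
      have "\<psi> \<xi> = 0" using \<psi>0 True by simp
      then have dl: "disc_lap \<psi> \<xi> \<ge> 0" unfolding disc_lap_def using \<psi>b[of "\<xi>+1"] \<psi>b[of "\<xi>-1"] by simp
      have "f 0 0 \<le> f 0 V" by (rule f_mono_v[OF f2_deriv F1_mono]) (use Vb K_pos in auto)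
      then have "f 0 V \<ge> 0" using F1_zero by simp
      then have "Nop c d \<tau> f h \<psi> \<xi> 0 \<le> 0"
      proof -
        have "d * disc_lap \<psi> \<xi> \<ge> 0" using dl d_pos by simp
        then show ?thesis unfolding Nop_def V_def[symmetric] \<open>\<psi> \<xi> = 0\<close> using \<open>f 0 V \<ge> 0\<close> by simp
      qed
      then show ?thesis using der by blast
    next
      case False
      then have lt: "\<xi> < \<xi>1" using ne by simp
      have gp: "g \<xi> > 0" using gpos lt by simp
      have op: "open {x. 0 < g x}" by (rule open_Collect_less) (auto intro: gcont)
      have der: "(\<psi> has_real_derivative g' \<xi>) (at \<xi>)"
        by (rule has_field_derivative_transform_within_open[OF gder op]) (use gp in \<open>auto simp: \<psi>_def\<close>)
      have \<psi>\<xi>: "\<psi> \<xi> = g \<xi>" using gp unfolding \<psi>_def by simp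
      note R = regb[of \<xi>]
      define e1 where "e1 = exp (lam1 * (\<xi> + m))"
      define e2 where "e2 = exp (\<eta> * lam1 * (\<xi> + m))"
      define X1 where "X1 = exp (lam1 * (\<xi> - c * \<tau> + m)) * Gfun h lam1"
      define X2 where "X2 = exp (\<eta> * lam1 * (\<xi> - c * \<tau> + m)) * Gfun h (\<eta> * lam1)"
      have ub: "g \<xi> \<le> e1" "0 \<le> g \<xi>" "g \<xi> \<le> K" using gle[of \<xi>] gp \<psi>b[of \<xi>] \<psi>\<xi> unfolding e1_def by auto
      have e1pos: "e1 > 0" unfolding e1_def by simp
      have F: "f (g \<xi>) V \<ge> A * g \<xi> + B * (X1 - q * X2) - M * ((1 + C1) * e1) powr (1 + \<sigma>)"
      proof (cases "B > 0")
        case True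
        have I1: "((\<lambda>y. h y * exp (lam1 * (\<xi> - c * \<tau> - y + m))) has_integral X1) UNIV"
          unfolding X1_def
          by (rule conv_exp, rule goodI) (use True lam_order in auto)
        have I2: "((\<lambda>y. h y * exp (\<eta> * lam1 * (\<xi> - c * \<tau> - y + m))) has_integral X2) UNIV"
          unfolding X2_def
          by (rule conv_exp, rule goodI) (use True lam_order eta_lam el in auto)
        have I: "((\<lambda>y. h y * exp (lam1 * (\<xi> - c * \<tau> - y + m)) - q * (h y * exp (\<eta> * lam1 * (\<xi> - c * \<tau> - y + m))))
            has_integral (X1 - q * X2)) UNIV"
          by (intro has_integral_diff has_integral_mult_right I1 I2)
        have Vlow: "X1 - q * X2 \<le> V" unfolding V_def conv_def
        proof (rule has_integral_le[OF I integrable_integral[OF Vint]])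
          fix y
          have "g (\<xi> - c * \<tau> - y) \<le> \<psi> (\<xi> - c * \<tau> - y)" unfolding \<psi>_def by simp
          then have "h y * g (\<xi> - c * \<tau> - y) \<le> h y * \<psi> (\<xi> - c * \<tau> - y)"
            using H1_nonneg by (intro mult_left_mono) auto
          then show "h y * exp (lam1 * (\<xi> - c * \<tau> - y + m)) - q * (h y * exp (\<eta> * lam1 * (\<xi> - c * \<tau> - y + m))) \<le> h y * \<psi> (\<xi> - c * \<tau> - y)"
            unfolding g_def by (simp add: algebra_simps)
        qed
        have Vup: "V \<le> X1" unfolding V_def conv_def
        proof (rule has_integral_le[OF integrable_integral[OF Vint] I1])
          fix y
          have "\<psi> (\<xi> - c * \<tau> - y) \<le> exp (lam1 * (\<xi> - c * \<tau> - y + m))"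
            unfolding \<psi>_def using gle[of "\<xi> - c * \<tau> - y"] by simp
          then show "h y * \<psi> (\<xi> - c * \<tau> - y) \<le> h y * exp (lam1 * (\<xi> - c * \<tau> - y + m))"
            using H1_nonneg by (intro mult_left_mono) auto
        qed
        have X1e: "X1 = C1 * e1"
        proof -
          have "exp (lam1 * (\<xi> - c * \<tau> + m)) = exp (- lam1 * c * \<tau>) * exp (lam1 * (\<xi> + m))"
            by (simp add: exp_add[symmetric] algebra_simps)
          then show ?thesis unfolding X1_def C1_def e1_def using True by simp
        qed
        have fb: "A * g \<xi> + B * V - f (g \<xi>) V \<le> M * (g \<xi> + V) powr (1 + \<sigma>)"
          using F2_bound[of "g \<xi>" V] ub Vb by auto
        have "(g \<xi> + V) powr (1 + \<sigma>) \<le> ((1 + C1) * e1) powr (1 + \<sigma>)"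
          using ub Vb Vup X1e F2_sigma by (intro powr_mono2) (auto simp: algebra_simps)
        then have "M * (g \<xi> + V) powr (1 + \<sigma>) \<le> M * ((1 + C1) * e1) powr (1 + \<sigma>)"
          using F2_M by (intro mult_left_mono) auto
        moreover have "B * (X1 - q * X2) \<le> B * V" using Vlow True by (intro mult_left_mono) auto
        ultimately show ?thesis using fb by linarith
      next
        case False
        then have B0: "B = 0" using B_nonneg by simp
        then have C0: "C1 = 0" unfolding C1_def by simp
        have "f (g \<xi>) 0 \<le> f (g \<xi>) V" by (rule f_mono_v[OF f2_deriv F1_mono]) (use Vb ub in auto)
        moreover have "A * g \<xi> - f (g \<xi>) 0 \<le> M * (g \<xi>) powr (1 + \<sigma>)"
          using F2_bound[of "g \<xi>" 0] ub K_pos B0 by auto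
        moreover have "(g \<xi>) powr (1 + \<sigma>) \<le> e1 powr (1 + \<sigma>)"
          using ub F2_sigma by (intro powr_mono2) auto
        then have "M * (g \<xi>) powr (1 + \<sigma>) \<le> M * e1 powr (1 + \<sigma>)"
          using F2_M by (intro mult_left_mono) auto
        ultimately show ?thesis using B0 C0 by simp
      qed
      have pw: "((1 + C1) * e1) powr (1 + \<sigma>) \<le> (1 + C1) powr (1 + \<sigma>) * e2"
      proof -
        have "e1 powr (1 + \<sigma>) = exp (lam1 * (\<xi> + m) * (1 + \<sigma>))" unfolding e1_def by (rule exp_powr_real)
        also have "\<dots> \<le> exp (\<eta> * lam1 * (\<xi> + m))"
        proof -
          have a: "lam1 * (\<xi> + m) \<le> 0" using R lt by simp
          have "lam1 * (\<xi> + m) * (1 + \<sigma>) \<le> lam1 * (\<xi> + m) * \<eta>"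
            using a eta by (intro mult_left_mono_neg) auto
          then show ?thesis by (simp add: mult.commute mult.left_commute)
        qed
        finally have "e1 powr (1 + \<sigma>) \<le> e2" unfolding e2_def .
        then show ?thesis unfolding powr_mult using C1_nonneg
          by (intro mult_left_mono) auto
      qed
      have dlS: "disc_lap g \<xi> \<le> disc_lap \<psi> \<xi>"
        unfolding disc_lap_def \<psi>\<xi> unfolding \<psi>_def by simp
      have dsplit: "disc_lap g \<xi> = disc_lap (\<lambda>x. exp (lam1 * (x + m))) \<xi> - q * disc_lap (\<lambda>x. exp (\<eta> * lam1 * (x + m))) \<xi>"
        unfolding disc_lap_def g_def by (simp add: algebra_simps)
      have le1: "c * (lam1 * e1) - d * disc_lap (\<lambda>x. exp (lam1 * (x + m))) \<xi> - A * e1 - B * X1 = 0"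
        using lin_exp[of lam1 \<xi> m] lam_roots unfolding e1_def X1_def by simp
      have le2: "c * (\<eta> * lam1 * e2) - d * disc_lap (\<lambda>x. exp (\<eta> * lam1 * (x + m))) \<xi> - A * e2 - B * X2 = Dl (\<eta> * lam1) * e2"
        using lin_exp[of "\<eta> * lam1" \<xi> m] unfolding e2_def X2_def by simp
      have g\<xi>: "g \<xi> = e1 - q * e2" "g' \<xi> = lam1 * e1 - q * (\<eta> * lam1 * e2)"
        unfolding g_def g'_def e1_def e2_def by simp_all
      have ddl: "d * disc_lap g \<xi> \<le> d * disc_lap \<psi> \<xi>" using dlS d_pos by (intro mult_left_mono) auto
      have iden: "c * g' \<xi> - d * disc_lap g \<xi> - A * g \<xi> - B * (X1 - q * X2)
         = (c * (lam1 * e1) - d * disc_lap (\<lambda>x. exp (lam1 * (x + m))) \<xi> - A * e1 - B * X1)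
          - q * (c * (\<eta> * lam1 * e2) - d * disc_lap (\<lambda>x. exp (\<eta> * lam1 * (x + m))) \<xi> - A * e2 - B * X2)"
        unfolding g\<xi> dsplit by (simp add: algebra_simps)
      have e2pos: "e2 > 0" unfolding e2_def by simp
      have fin: "M * ((1 + C1) * e1) powr (1 + \<sigma>) \<le> q * (Dl (\<eta> * lam1) * e2)"
      proof -
        have "M * ((1 + C1) * e1) powr (1 + \<sigma>) \<le> M * ((1 + C1) powr (1 + \<sigma>) * e2)"
          using pw F2_M by (intro mult_left_mono) auto
        also have "\<dots> = (M * (1 + C1) powr (1 + \<sigma>)) * e2" by simp
        also have "\<dots> \<le> (q * Dl (\<eta> * lam1)) * e2" using qM' e2pos by (intro mult_right_mono) auto
        finally show ?thesis by simp
      qed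
      have "Nop c d \<tau> f h \<psi> \<xi> (g' \<xi>) = c * g' \<xi> - d * disc_lap \<psi> \<xi> - f (g \<xi>) V"
        unfolding Nop_def V_def \<psi>\<xi> by simp
      also have "\<dots> \<le> c * g' \<xi> - d * disc_lap g \<xi> - A * g \<xi> - B * (X1 - q * X2) + M * ((1 + C1) * e1) powr (1 + \<sigma>)"
        using F ddl by linarith
      finally have "Nop c d \<tau> f h \<psi> \<xi> (g' \<xi>) \<le> 0" unfolding iden le1 le2 using fin by linarith
      then show ?thesis using der by blast
    qed
  qed
  have ae: "AE \<xi> in lborel. \<exists>D. (\<psi> has_real_derivative D) (at \<xi>) \<and> Nop c d \<tau> f h \<psi> \<xi> D \<le> 0"
    using key by (auto intro: AE_mp[OF AE_lborel_singleton[of \<xi>1]])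
  show ?thesis unfolding \<psi>eq sub_solution_def
    using adm \<psi>c lim nz ae by auto
qed

end


theorem lemma3p3:
  fixes d \<tau> K M \<sigma> c cstar lam1 lam2 \<eta> :: real
    and f f1 f2 :: "real \<Rightarrow> real \<Rightarrow> real"
    and h :: "real \<Rightarrow> real"
    and lam0 :: ereal
  assumes d_pos: "d > 0" and tau_nonneg: "\<tau> \<ge> 0" and K_pos: "K > 0"
    \<comment> \<open>partial derivatives f1 = \<partial>_1 f, f2 = \<partial>_2 f on [0,K]^2\<close>
    and f1_deriv: "\<And>u v. u \<in> {0..K} \<Longrightarrow> v \<in> {0..K} \<Longrightarrow>
        ((\<lambda>x. f x v) has_real_derivative f1 u v) (at u within {0..K})"
    and f2_deriv: "\<And>u v. u \<in> {0..K} \<Longrightarrow> v \<in> {0..K} \<Longrightarrow>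
        ((\<lambda>y. f u y) has_real_derivative f2 u v) (at v within {0..K})"
    \<comment> \<open>(F1)\<close>
    and F1_cont: "continuous_on ({0..K} \<times> {0..K}) (\<lambda>(u, v). f u v)"
    and F1_zero: "f 0 0 = 0" "f K K = 0"
    and F1_pos: "\<And>u. 0 < u \<Longrightarrow> u < K \<Longrightarrow> f u u > 0"
    and F1_mono: "\<And>u v. u \<in> {0..K} \<Longrightarrow> v \<in> {0..K} \<Longrightarrow> f2 u v \<ge> 0"
    \<comment> \<open>(F2)\<close>
    and F2_M: "M > 0" and F2_sigma: "0 < \<sigma>" "\<sigma> \<le> 1"
    and F2_bound: "\<And>u v. u \<in> {0..K} \<Longrightarrow> v \<in> {0..K} \<Longrightarrow>
        0 \<le> f1 0 0 * u + f2 0 0 * v - f u v \<and>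
        f1 0 0 * u + f2 0 0 * v - f u v \<le> M * (u + v) powr (1 + \<sigma>)"
    and F2_K: "f1 K K + f2 K K < 0"
    \<comment> \<open>(H1)\<close>
    and H1_nonneg: "\<And>x. h x \<ge> 0" and H1_even: "\<And>x. h (- x) = h x"
    and H1_int: "h integrable_on UNIV" and H1_one: "integral UNIV h = 1"
    \<comment> \<open>(H2)\<close>
    and H2_pos: "lam0 > 0"
    and H2_exp: "\<And>l. ereal l < lam0 \<Longrightarrow> (\<lambda>x. h x * exp (l * x)) integrable_on {0..}"
    \<comment> \<open>c^* and its defining property (from the context)\<close>
    and cstar_pos: "cstar > 0"
    and cstar_def: "\<exists>ls. 0 < ls \<and> ereal ls < lambda_plus (f2 0 0) lam0 \<and>
        Delta d \<tau> (f1 0 0) (f2 0 0) h cstar ls = 0 \<and>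
        ((\<lambda>l. Delta d \<tau> (f1 0 0) (f2 0 0) h cstar l) has_real_derivative 0) (at ls)"
    and cstar_unique: "\<And>c' ls. c' > 0 \<Longrightarrow> 0 < ls \<Longrightarrow> ereal ls < lambda_plus (f2 0 0) lam0 \<Longrightarrow>
        Delta d \<tau> (f1 0 0) (f2 0 0) h c' ls = 0 \<Longrightarrow>
        ((\<lambda>l. Delta d \<tau> (f1 0 0) (f2 0 0) h c' l) has_real_derivative 0) (at ls) \<Longrightarrow> c' = cstar"
    and c_gt: "c > cstar"
    \<comment> \<open>lam1(c) < lam2(c): the two positive roots of \<Delta>(c,.) in (0,\<lambda>^+)\<close>
    and lam_order: "0 < lam1" "lam1 < lam2" "ereal lam2 < lambda_plus (f2 0 0) lam0"
    and lam_roots: "Delta d \<tau> (f1 0 0) (f2 0 0) h c lam1 = 0"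
                   "Delta d \<tau> (f1 0 0) (f2 0 0) h c lam2 = 0"
    and lam_only: "\<And>l. 0 < l \<Longrightarrow> ereal l < lambda_plus (f2 0 0) lam0 \<Longrightarrow>
        Delta d \<tau> (f1 0 0) (f2 0 0) h c l = 0 \<Longrightarrow> l = lam1 \<or> l = lam2"
    \<comment> \<open>\<eta> \<in> (1, min{1+\<sigma>, lam2/lam1})\<close>
    and eta: "1 < \<eta>" "\<eta> < 1 + \<sigma>" "\<eta> < lam2 / lam1"
  shows "\<exists>Q > 1. \<forall>q > Q. \<forall>\<xi>p \<xi>m.
     super_solution K c d \<tau> f h
       (\<lambda>\<xi>. min K (exp (lam1 * (\<xi> + \<xi>p)) + q * exp (\<eta> * lam1 * (\<xi> + \<xi>p)))) \<and>
     sub_solution K c d \<tau> f h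
       (\<lambda>\<xi>. max 0 (exp (lam1 * (\<xi> + \<xi>m)) - q * exp (\<eta> * lam1 * (\<xi> + \<xi>m))))"
  proof -
  interpret LS d \<tau> K M \<sigma> c lam1 lam2 \<eta> f f1 f2 h lam0
    by unfold_locales (fact assms)+
  have Q0: "Q0 \<ge> 1" unfolding Q0_def by simp
  show ?thesis
  proof (intro exI[of _ "Q0 + 1"] conjI allI impI)
    show "Q0 + 1 > 1" using Q0 by simp
    fix q \<xi>p \<xi>m :: real assume q: "q > Q0 + 1"
    show "super_solution K c d \<tau> f h
       (\<lambda>\<xi>. min K (exp (lam1 * (\<xi> + \<xi>p)) + q * exp (\<eta> * lam1 * (\<xi> + \<xi>p))))"
      by (rule super) (use q Q0 in simp)
    show "sub_solution K c d \<tau> f h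
       (\<lambda>\<xi>. max 0 (exp (lam1 * (\<xi> + \<xi>m)) - q * exp (\<eta> * lam1 * (\<xi> + \<xi>m))))"
      by (rule sub) (use q in simp)
  qed
qed

end
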